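(* Let $G$ be a graph with edge weights $w(e)\ge 1$, let $\alpha>1$ and $r\in[0,1)$, and let levels, rounded weights $w_r$, level matchings $M_l$, the combined matching $\hat{M}$ and the sets $\mathcal{R}(e)$ be as defined below. Then for every $e\in\hat{M}$, $$\Phi(e)\le\frac{\alpha+1}{\alpha-1}\,w_r(e),$$ where $\Phi(e)=\sum_{e'\in\mathcal{R}(e)}w_r(e')$.
   Context: An edge $e$ is assigned to level $l\in\mathbb{Z}$ if $w(e)\in[\alpha^{l+r},\alpha^{l+r+1})$, and its rounded weight is $w_r(e)=\alpha^{l+r}$. For each level $l$, $M_l$ is a matching consisting of edges of level $l$. The combined matching $\hat{M}$ is produced by the greedy process: start with $\hat{M}=\emptyset$; for $l$ from the maximum level down to the minimum level, add all (remaining) edges of $M_l$ to $\hat{M}$, and for each $(u,v)\in M_l$ remove all edges incident to $u$ or $v$ from every $M_{l'}$ with $l'<l$. For $e=(u,v)\in\hat{M}$ lying on level $l$, $\mathcal{R}(e)=\{e\}\cup\{(x,y)\in M_{l'}: l'<l,\ \{x,y\}\cap\{u,v\}\neq\emptyset\}$ (here $M_{l'}$ refers to the level matchings before removals). *)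

theory Defs
  imports Complex_Main
begin

definition graph :: "'a set set \<Rightarrow> bool" where
  "graph E \<longleftrightarrow> finite E \<and> (\<forall>e\<in>E. card e = 2)"

definition matching :: "'a set set \<Rightarrow> bool" where
  "matching M \<longleftrightarrow> (\<forall>e\<in>M. \<forall>f\<in>M. e \<noteq> f \<longrightarrow> e \<inter> f = {})"

definition level :: "real \<Rightarrow> real \<Rightarrow> ('e \<Rightarrow> real) \<Rightarrow> 'e \<Rightarrow> int" where
  "level \<alpha> r w e = (THE l::int. \<alpha> powr (real_of_int l + r) \<le> w e \<and> w e < \<alpha> powr (real_of_int l + r + 1))"

definition rounded_weight :: "real \<Rightarrow> real \<Rightarrow> ('e \<Rightarrow> real) \<Rightarrow> 'e \<Rightarrow> real" where
  "rounded_weight \<alpha> r w e = \<alpha> powr (real_of_int (level \<alpha> r w e) + r)"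

text \<open>One step of the greedy process at level l: state (Mhat, current level matchings).\<close>
definition greedy_step :: "int \<Rightarrow> 'a set set \<times> (int \<Rightarrow> 'a set set) \<Rightarrow> 'a set set \<times> (int \<Rightarrow> 'a set set)" where
  "greedy_step l st = (case st of (Mh, Ms) \<Rightarrow>
     (Mh \<union> Ms l,
      \<lambda>l'. if l' < l then {f \<in> Ms l'. \<forall>g \<in> Ms l. f \<inter> g = {}} else Ms l'))"

definition combined_matching :: "real \<Rightarrow> real \<Rightarrow> ('a set \<Rightarrow> real) \<Rightarrow> 'a set set \<Rightarrow> (int \<Rightarrow> 'a set set) \<Rightarrow> 'a set set" where
  "combined_matching \<alpha> r w E M =
     (let lv = level \<alpha> r w ` E in
      fst (fold greedy_step (rev [Min lv..Max lv]) ({}, M)))"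

definition R_set :: "real \<Rightarrow> real \<Rightarrow> ('a set \<Rightarrow> real) \<Rightarrow> (int \<Rightarrow> 'a set set) \<Rightarrow> 'a set \<Rightarrow> 'a set set" where
  "R_set \<alpha> r w M e = {e} \<union> {f. \<exists>l'. l' < level \<alpha> r w e \<and> f \<in> M l' \<and> f \<inter> e \<noteq> {}}"

definition Phi :: "real \<Rightarrow> real \<Rightarrow> ('a set \<Rightarrow> real) \<Rightarrow> (int \<Rightarrow> 'a set set) \<Rightarrow> 'a set \<Rightarrow> real" where
  "Phi \<alpha> r w M e = (\<Sum>f \<in> R_set \<alpha> r w M e. rounded_weight \<alpha> r w f)"

end

theory Submission
  imports Defs
begin

lemma fold_greedy_inv:
  assumes "fst st \<subseteq> \<Union>(range M)" "\<forall>l. snd st l \<subseteq> M l"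
  shows "fst (fold greedy_step ls st) \<subseteq> \<Union>(range M) \<and> (\<forall>l. snd (fold greedy_step ls st) l \<subseteq> M l)"
  using assms
proof (induction ls arbitrary: st)
  case Nil then show ?case by simp
next
  case (Cons a ls)
  obtain Mh Ms where st: "st = (Mh, Ms)" by fastforce
  have "fst (greedy_step a st) \<subseteq> \<Union>(range M)"
    using Cons.prems by (auto simp: st greedy_step_def)
  moreover have "\<forall>l. snd (greedy_step a st) l \<subseteq> M l"
    using Cons.prems by (auto simp: st greedy_step_def)
  ultimately show ?case using Cons.IH by simp
qed

lemma geo:
  fixes \<alpha> r :: real and l :: int
  assumes "\<alpha> > 1"
  shows "(\<Sum>x\<in>{l - int k..<l}. \<alpha> powr (real_of_int x + r))
     = (\<alpha> powr (real_of_int l + r) - \<alpha> powr (real_of_int (l - int k) + r)) / (\<alpha> - 1)"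
proof (induction k)
  case 0 then show ?case by simp
next
  case (Suc k)
  have set: "{l - int (Suc k)..<l} = insert (l - int k - 1) {l - int k..<l}" by auto
  have p: "\<alpha> powr (real_of_int (l - int k) + r) = \<alpha> powr (real_of_int (l - int k - 1) + r) * \<alpha>"
  proof -
    have "real_of_int (l - int k) + r = (real_of_int (l - int k - 1) + r) + 1" by simp
    then show ?thesis using assms by (simp only: powr_add) simp
  qed
  have alg: "C + (A - C * \<alpha>) / (\<alpha> - 1) = (A - C) / (\<alpha> - 1)" for A C :: real
    using assms by (simp add: field_simps)
  have "(\<Sum>x\<in>{l - int (Suc k)..<l}. \<alpha> powr (real_of_int x + r))
      = \<alpha> powr (real_of_int (l - int k - 1) + r) + (\<Sum>x\<in>{l - int k..<l}. \<alpha> powr (real_of_int x + r))"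
    unfolding set by (subst sum.insert) auto
  also have "\<dots> = (\<alpha> powr (real_of_int l + r) - \<alpha> powr (real_of_int (l - int k - 1) + r)) / (\<alpha> - 1)"
    unfolding Suc p by (rule alg)
  finally show ?case by (simp add: algebra_simps)
qed

lemma geo_bound:
  fixes \<alpha> r :: real and l :: int
  assumes "\<alpha> > 1" "finite L" "\<forall>x\<in>L. x < l"
  shows "(\<Sum>x\<in>L. \<alpha> powr (real_of_int x + r)) \<le> \<alpha> powr (real_of_int l + r) / (\<alpha> - 1)"
proof -
  obtain k where k: "\<forall>x\<in>L. l - int k \<le> x"
  proof (cases "L = {}")
    case True then show ?thesis using that by auto
  next
    case False
    have "\<forall>x\<in>L. Min L \<le> x" using assms(2) by auto
    moreover have "Min L < l" using assms False by auto
    ultimately show ?thesis using that[of "nat (l - Min L)"] by auto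
  qed
  have sub: "L \<subseteq> {l - int k..<l}" using k assms by auto
  have "(\<Sum>x\<in>L. \<alpha> powr (real_of_int x + r)) \<le> (\<Sum>x\<in>{l - int k..<l}. \<alpha> powr (real_of_int x + r))"
    by (rule sum_mono2) (use sub in auto)
  also have "\<dots> = (\<alpha> powr (real_of_int l + r) - \<alpha> powr (real_of_int (l - int k) + r)) / (\<alpha> - 1)"
    by (rule geo[OF assms(1)])
  also have "\<dots> \<le> \<alpha> powr (real_of_int l + r) / (\<alpha> - 1)"
    using assms(1) by (simp add: divide_right_mono)
  finally show ?thesis .
qed

lemma card_meet:
  assumes "matching N" "finite N" "card e = 2"
  shows "card {f\<in>N. f \<inter> e \<noteq> {}} \<le> 2"
proof -
  obtain u v where e: "e = {u, v}" using assms(3) card_2_iff by metis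
  have sub: "{f\<in>N. f \<inter> e \<noteq> {}} \<subseteq> {f\<in>N. u \<in> f} \<union> {f\<in>N. v \<in> f}" using e by auto
  have c: "card {f\<in>N. x \<in> f} \<le> 1" for x
  proof -
    have "finite {f\<in>N. x \<in> f}" using assms(2) by auto
    moreover have "\<forall>a\<in>{f\<in>N. x \<in> f}. \<forall>b\<in>{f\<in>N. x \<in> f}. a = b"
      using assms(1) unfolding matching_def by blast
    ultimately have "card {f\<in>N. x \<in> f} \<le> Suc 0" by (simp only: card_le_Suc0_iff_eq)
    then show ?thesis by simp
  qed
  have "card {f\<in>N. f \<inter> e \<noteq> {}} \<le> card ({f\<in>N. u \<in> f} \<union> {f\<in>N. v \<in> f})"
    by (rule card_mono) (use assms(2) sub in auto)
  also have "\<dots> \<le> card {f\<in>N. u \<in> f} + card {f\<in>N. v \<in> f}" by (rule card_Un_le)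
  also have "\<dots> \<le> 2" using c[of u] c[of v] by simp
  finally show ?thesis .
qed

theorem lemma6:
  fixes E :: "'a set set" and w :: "'a set \<Rightarrow> real" and \<alpha> r :: real
    and M :: "int \<Rightarrow> 'a set set"
  assumes "graph E"
    and "\<forall>e\<in>E. w e \<ge> 1"
    and "\<alpha> > 1" and "0 \<le> r" and "r < 1"
    and "\<forall>l. M l \<subseteq> {e \<in> E. level \<alpha> r w e = l} \<and> matching (M l)"
    and "e \<in> combined_matching \<alpha> r w E M"
  shows "Phi \<alpha> r w M e \<le> (\<alpha> + 1) / (\<alpha> - 1) * rounded_weight \<alpha> r w e"
proof -
  have fE: "finite E" and c2: "\<forall>x\<in>E. card x = 2" using assms(1) by (auto simp: graph_def)
  have "e \<in> \<Union>(range M)"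
  proof -
    have "fst (fold greedy_step ls ({}, M)) \<subseteq> \<Union>(range M)" for ls
      using fold_greedy_inv[of "({}, M)" M ls] by simp
    then show ?thesis using assms(7) unfolding combined_matching_def Let_def by blast
  qed
  then obtain l where el: "e \<in> M l" by auto
  have lev: "\<And>f l'. f \<in> M l' \<Longrightarrow> f \<in> E \<and> level \<alpha> r w f = l'" using assms(6) by blast
  have le: "level \<alpha> r w e = l" and eE: "e \<in> E" using lev[OF el] by auto
  define F where "F = {f. \<exists>l'. l' < l \<and> f \<in> M l' \<and> f \<inter> e \<noteq> {}}"
  have FE: "F \<subseteq> E" unfolding F_def using lev by blast
  have fF: "finite F" using FE fE finite_subset by blast
  have eF: "e \<notin> F" unfolding F_def using lev le by fastforce
  have R: "R_set \<alpha> r w M e = insert e F" unfolding R_set_def F_def le by auto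
  define rw where "rw = rounded_weight \<alpha> r w"
  have Phi: "Phi \<alpha> r w M e = rw e + sum rw F"
    unfolding Phi_def R rw_def using fF eF by simp
  let ?lv = "level \<alpha> r w"
  have grp: "sum rw F = (\<Sum>y\<in>?lv ` F. sum rw {x\<in>F. ?lv x = y})"
    by (rule sum.group[symmetric]) (use fF in auto)
  have inner: "sum rw {x\<in>F. ?lv x = y} \<le> 2 * \<alpha> powr (real_of_int y + r)" if y: "y \<in> ?lv ` F" for y
  proof -
    have yl: "y < l" using y lev unfolding F_def by fastforce
    have S: "{x\<in>F. ?lv x = y} = {f\<in>M y. f \<inter> e \<noteq> {}}"
      unfolding F_def using lev yl by fastforce
    have "M y \<subseteq> E" using lev by blast
    then have fM: "finite (M y)" using fE by (rule finite_subset)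
    have cS: "card {f\<in>M y. f \<inter> e \<noteq> {}} \<le> 2"
      using card_meet[of "M y" e] assms(6) fM c2 eE by blast
    have "sum rw {f\<in>M y. f \<inter> e \<noteq> {}} = (\<Sum>f\<in>{f\<in>M y. f \<inter> e \<noteq> {}}. \<alpha> powr (real_of_int y + r))"
    proof (rule sum.cong)
      fix f assume "f \<in> {f\<in>M y. f \<inter> e \<noteq> {}}"
      then have "?lv f = y" using lev by blast
      then show "rw f = \<alpha> powr (real_of_int y + r)" unfolding rw_def rounded_weight_def by simp
    qed simp
    also have "\<dots> = real (card {f\<in>M y. f \<inter> e \<noteq> {}}) * \<alpha> powr (real_of_int y + r)" by simp
    also have "\<dots> \<le> 2 * \<alpha> powr (real_of_int y + r)"
      using cS by (intro mult_right_mono) auto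
    finally show ?thesis using S by simp
  qed
  have "sum rw F \<le> (\<Sum>y\<in>?lv ` F. 2 * \<alpha> powr (real_of_int y + r))"
    unfolding grp by (rule sum_mono) (rule inner)
  also have "\<dots> = 2 * (\<Sum>y\<in>?lv ` F. \<alpha> powr (real_of_int y + r))" by (simp add: sum_distrib_left)
  also have "\<dots> \<le> 2 * (\<alpha> powr (real_of_int l + r) / (\<alpha> - 1))"
  proof -
    have "\<forall>y\<in>?lv ` F. y < l" using lev unfolding F_def by fastforce
    then show ?thesis using geo_bound[OF assms(3), of "?lv ` F" l r] fF by simp
  qed
  finally have sF: "sum rw F \<le> 2 * (\<alpha> powr (real_of_int l + r) / (\<alpha> - 1))" .
  have rwe: "rw e = \<alpha> powr (real_of_int l + r)" unfolding rw_def rounded_weight_def le ..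
  have "(\<alpha> + 1) / (\<alpha> - 1) * rw e = rw e + 2 * (\<alpha> powr (real_of_int l + r) / (\<alpha> - 1))"
    using assms(3) unfolding rwe by (simp add: field_simps)
  then show ?thesis using Phi sF unfolding rw_def by linarith
qed

end
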